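(* Let $(z,x)$ be a feasible solution of the cluster LP on a finite vertex set $V$, and for every $S\subseteq V$ define $y_S=\sum_{S'\supseteq S}z_{S'}$. Then for every nonempty $T\subseteq V$, the matrix $M\in\mathbb R^{V\times V}$ with entries $M_{uv}=y_{T\cup\{u,v\}}-y_{T\cup\{u\}}\,y_{T\cup\{v\}}$ (for all $u,v\in V$, including $u=v$) is positive semidefinite.
   Context: The cluster LP for a finite vertex set $V$ has a variable $z_S$ for every nonempty $S\subseteq V$ and $x_{uv}$ for every unordered pair $uv$ of distinct vertices, with constraints $\sum_{S\ni u}z_S=1$ for all $u\in V$, $\sum_{S\supseteq\{u,v\}}z_S=1-x_{uv}$ for all $uv$, and $z_S\ge0$. *)

theory Defs
  imports Complex_Main
begin

text \<open>The variables z are indexed by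
subsets of V (only nonempty ones are meaningful), the variables x by unordered
pairs of distinct vertices, represented as two-element sets {u,v}.\<close>

definition cluster_lp_feasible :: "'a set \<Rightarrow> ('a set \<Rightarrow> real) \<Rightarrow> ('a set \<Rightarrow> real) \<Rightarrow> bool" where
  "cluster_lp_feasible V z x \<longleftrightarrow>
     finite V \<and>
     (\<forall>S. S \<subseteq> V \<and> S \<noteq> {} \<longrightarrow> z S \<ge> 0) \<and>
     (\<forall>u\<in>V. (\<Sum>S\<in>{S. S \<subseteq> V \<and> S \<noteq> {} \<and> u \<in> S}. z S) = 1) \<and>
     (\<forall>u\<in>V. \<forall>v\<in>V. u \<noteq> v \<longrightarrow>
        (\<Sum>S\<in>{S. S \<subseteq> V \<and> S \<noteq> {} \<and> {u, v} \<subseteq> S}. z S) = 1 - x {u, v})"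

definition yvar :: "'a set \<Rightarrow> ('a set \<Rightarrow> real) \<Rightarrow> 'a set \<Rightarrow> real" where
  "yvar V z S = (\<Sum>S'\<in>{S'. S' \<subseteq> V \<and> S' \<noteq> {} \<and> S \<subseteq> S'}. z S')"

definition psd_on :: "'a set \<Rightarrow> ('a \<Rightarrow> 'a \<Rightarrow> real) \<Rightarrow> bool" where
  "psd_on V M \<longleftrightarrow> (\<forall>u\<in>V. \<forall>v\<in>V. M u v = M v u) \<and>
     (\<forall>c :: 'a \<Rightarrow> real. (\<Sum>u\<in>V. \<Sum>v\<in>V. c u * M u v * c v) \<ge> 0)"

end

theory Submission
  imports Defs
begin

lemma var_ineq:
  fixes F :: "'b set" and w g :: "'b \<Rightarrow> real"
  assumes "finite F" "\<And>S. S \<in> F \<Longrightarrow> w S \<ge> 0" "sum w F \<le> 1"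
  shows "(\<Sum>S\<in>F. w S * g S) ^ 2 \<le> (\<Sum>S\<in>F. w S * (g S)^2)"
proof -
  define m where "m = (\<Sum>S\<in>F. w S * g S)"
  have "0 \<le> (\<Sum>S\<in>F. w S * (g S - m)^2)"
    using assms by (intro sum_nonneg) auto
  also have "\<dots> = (\<Sum>S\<in>F. w S * (g S)^2) - 2 * m * (\<Sum>S\<in>F. w S * g S) + m^2 * sum w F"
    by (simp add: power2_eq_square algebra_simps sum.distrib sum_subtractf sum_distrib_left sum_distrib_right)
  finally have "0 \<le> (\<Sum>S\<in>F. w S * (g S)^2) - 2 * m^2 + m^2 * sum w F"
    by (simp add: m_def power2_eq_square)
  moreover have "m^2 * sum w F \<le> m^2" using assms(3) by (simp add: mult_left_le)
  ultimately show ?thesis unfolding m_def[symmetric] by linarith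
qed

theorem lemma24:
  fixes V :: "'a set" and z x :: "'a set \<Rightarrow> real" and T :: "'a set"
  assumes "cluster_lp_feasible V z x"
    and "T \<subseteq> V" and "T \<noteq> {}"
  shows "psd_on V (\<lambda>u v. yvar V z (T \<union> {u, v}) - yvar V z (T \<union> {u}) * yvar V z (T \<union> {v}))"
proof -
  have finV: "finite V" and nn: "\<And>S. S \<subseteq> V \<Longrightarrow> S \<noteq> {} \<Longrightarrow> z S \<ge> 0"
    and one: "\<And>u. u \<in> V \<Longrightarrow> (\<Sum>S\<in>{S. S \<subseteq> V \<and> S \<noteq> {} \<and> u \<in> S}. z S) = 1"
    using assms(1) unfolding cluster_lp_feasible_def by auto
  obtain t where t: "t \<in> T" using assms(3) by blast
  define F where "F = {S. S \<subseteq> V \<and> S \<noteq> {} \<and> T \<subseteq> S}"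
  define ind :: "'a \<Rightarrow> 'a set \<Rightarrow> real" where "ind u S = (if u \<in> S then 1 else 0)" for u S
  have finF: "finite F" unfolding F_def using finV
    by (rule finite_subset[rotated, OF finite_Collect_subsets]) auto
  have wnn: "\<And>S. S \<in> F \<Longrightarrow> z S \<ge> 0" unfolding F_def using nn by auto
  have G_fin: "finite {S. S \<subseteq> V \<and> S \<noteq> {} \<and> t \<in> S}" using finV
    by (rule finite_subset[rotated, OF finite_Collect_subsets]) auto
  have sumF: "sum z F \<le> 1"
  proof -
    have "sum z F \<le> (\<Sum>S\<in>{S. S \<subseteq> V \<and> S \<noteq> {} \<and> t \<in> S}. z S)"
      by (rule sum_mono2[OF G_fin]) (use t nn in \<open>auto simp: F_def\<close>)
    also have "\<dots> = 1" using one t assms(2) by auto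
    finally show ?thesis .
  qed
  have y2: "yvar V z (T \<union> {u, v}) = (\<Sum>S\<in>F. z S * ind u S * ind v S)" for u v
  proof -
    have e: "{S'. S' \<subseteq> V \<and> S' \<noteq> {} \<and> T \<union> {u, v} \<subseteq> S'} = {S\<in>F. u \<in> S \<and> v \<in> S}"
      by (auto simp: F_def)
    have "(\<Sum>S\<in>F. z S * ind u S * ind v S) = (\<Sum>S\<in>F. if u \<in> S \<and> v \<in> S then z S else 0)"
      by (rule sum.cong) (auto simp: ind_def)
    thus ?thesis unfolding yvar_def e by (simp add: sum.inter_filter[OF finF])
  qed
  have y1: "yvar V z (T \<union> {u}) = (\<Sum>S\<in>F. z S * ind u S)" for u
  proof -
    have e: "{S'. S' \<subseteq> V \<and> S' \<noteq> {} \<and> T \<union> {u} \<subseteq> S'} = {S\<in>F. u \<in> S}"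
      by (auto simp: F_def)
    have "(\<Sum>S\<in>F. z S * ind u S) = (\<Sum>S\<in>F. if u \<in> S then z S else 0)"
      by (rule sum.cong) (auto simp: ind_def)
    thus ?thesis unfolding yvar_def e by (simp add: sum.inter_filter[OF finF])
  qed
  show ?thesis unfolding psd_on_def
  proof (intro conjI ballI allI)
    fix u v assume "u \<in> V" "v \<in> V"
    show "yvar V z (T \<union> {u, v}) - yvar V z (T \<union> {u}) * yvar V z (T \<union> {v}) =
          yvar V z (T \<union> {v, u}) - yvar V z (T \<union> {v}) * yvar V z (T \<union> {u})"
      by (simp add: insert_commute)
  next
    fix c :: "'a \<Rightarrow> real"
    define g where "g S = (\<Sum>u\<in>V. c u * ind u S)" for S
    have A: "(\<Sum>u\<in>V. \<Sum>v\<in>V. c u * (\<Sum>S\<in>F. z S * ind u S * ind v S) * c v)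
           = (\<Sum>S\<in>F. z S * (g S)^2)"
    proof -
      have "(\<Sum>u\<in>V. \<Sum>v\<in>V. c u * (\<Sum>S\<in>F. z S * ind u S * ind v S) * c v)
          = (\<Sum>u\<in>V. \<Sum>v\<in>V. \<Sum>S\<in>F. z S * (c u * ind u S) * (c v * ind v S))"
        by (intro sum.cong refl) (simp add: sum_distrib_left sum_distrib_right mult_ac)
      also have "\<dots> = (\<Sum>u\<in>V. \<Sum>S\<in>F. \<Sum>v\<in>V. z S * (c u * ind u S) * (c v * ind v S))"
        by (intro sum.cong refl sum.swap)
      also have "\<dots> = (\<Sum>S\<in>F. \<Sum>u\<in>V. \<Sum>v\<in>V. z S * (c u * ind u S) * (c v * ind v S))"
        by (rule sum.swap)
      also have "\<dots> = (\<Sum>S\<in>F. z S * (g S)^2)"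
        by (intro sum.cong refl) (simp add: g_def power2_eq_square sum_distrib_left sum_distrib_right mult_ac)
      finally show ?thesis .
    qed
    have C: "(\<Sum>u\<in>V. c u * (\<Sum>S\<in>F. z S * ind u S)) = (\<Sum>S\<in>F. z S * g S)"
    proof -
      have "(\<Sum>u\<in>V. c u * (\<Sum>S\<in>F. z S * ind u S)) = (\<Sum>u\<in>V. \<Sum>S\<in>F. z S * (c u * ind u S))"
        by (intro sum.cong refl) (simp add: sum_distrib_left mult_ac)
      also have "\<dots> = (\<Sum>S\<in>F. \<Sum>u\<in>V. z S * (c u * ind u S))" by (rule sum.swap)
      also have "\<dots> = (\<Sum>S\<in>F. z S * g S)"
        by (intro sum.cong refl) (simp add: g_def sum_distrib_left)
      finally show ?thesis .
    qed
    have B: "(\<Sum>u\<in>V. \<Sum>v\<in>V. c u * ((\<Sum>S\<in>F. z S * ind u S) * (\<Sum>S\<in>F. z S * ind v S)) * c v)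
           = (\<Sum>S\<in>F. z S * g S)^2"
    proof -
      define a where "a u = (\<Sum>S\<in>F. z S * ind u S)" for u
      have "(\<Sum>u\<in>V. \<Sum>v\<in>V. c u * (a u * a v) * c v)
          = (\<Sum>u\<in>V. c u * a u) * (\<Sum>v\<in>V. c v * a v)"
        unfolding sum_product by (intro sum.cong refl) (simp only: mult_ac)
      thus ?thesis using C unfolding a_def[symmetric] by (simp only: power2_eq_square)
    qed
    have "(\<Sum>u\<in>V. \<Sum>v\<in>V. c u * (yvar V z (T \<union> {u, v}) - yvar V z (T \<union> {u}) * yvar V z (T \<union> {v})) * c v)
        = (\<Sum>u\<in>V. \<Sum>v\<in>V. c u * (\<Sum>S\<in>F. z S * ind u S * ind v S) * c v)
          - (\<Sum>u\<in>V. \<Sum>v\<in>V. c u * ((\<Sum>S\<in>F. z S * ind u S) * (\<Sum>S\<in>F. z S * ind v S)) * c v)"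
      unfolding y1 y2 by (simp only: right_diff_distrib left_diff_distrib sum_subtractf)
    also have "\<dots> \<ge> 0" unfolding A B using var_ineq[OF finF wnn sumF] by simp
    finally show "0 \<le> (\<Sum>u\<in>V. \<Sum>v\<in>V. c u * (yvar V z (T \<union> {u, v}) - yvar V z (T \<union> {u}) * yvar V z (T \<union> {v})) * c v)" .
  qed
qed

end
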